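(* Let $X,\hat X$ be real matrices of the same size with singular value decompositions $X=U\Sigma V^T$ and $\hat X=\hat U\hat\Sigma\hat V^T$ (with $U,V,\hat U,\hat V$ having orthonormal columns and $\Sigma,\hat\Sigma$ square nonnegative diagonal). Assume $\|X\|<1$, $\|\hat X\|<1$ and $\|X\|^2+2\|\hat X-X\|<1$. Then $$\big\|U\Sigma(I-\Sigma^2)^{-1}V^T-\hat U\hat\Sigma(I-\hat\Sigma^2)^{-1}\hat V^T\big\|\le\frac{3\|X-\hat X\|}{(1-\|X\|^2-2\|\hat X-X\|)^2}.$$
   Context: $\|\cdot\|$ denotes the spectral norm. *)

theory Defs
  imports "HOL-Analysis.Analysis"
begin

definition spec_norm :: "real^'n^'m \<Rightarrow> real" where
  "spec_norm A = onorm (\<lambda>x. A *v x)"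

definition orth_cols :: "real^'k^'m \<Rightarrow> bool" where
  "orth_cols U \<longleftrightarrow> transpose U ** U = mat 1"

definition nonneg_diag :: "real^'k^'k \<Rightarrow> bool" where
  "nonneg_diag S \<longleftrightarrow> (\<forall>i j. i \<noteq> j \<longrightarrow> S $ i $ j = 0) \<and> (\<forall>i. S $ i $ i \<ge> 0)"

end

theory Submission
  imports Defs
begin

lemma sn_bound: "norm (A *v x) \<le> spec_norm A * norm x"
  unfolding spec_norm_def by (rule onorm) simp

lemma sn_le: assumes "\<And>x. norm (A *v x) \<le> b * norm x" shows "spec_norm A \<le> b"
  unfolding spec_norm_def by (rule onorm_le) (use assms in auto)

lemma sn_nonneg: "0 \<le> spec_norm A"
  unfolding spec_norm_def by (rule onorm_pos_le) simp

lemma sn_mult: "spec_norm ((A::real^'n^'m) ** (B::real^'k^'n)) \<le> spec_norm A * spec_norm B"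
proof (rule sn_le)
  fix x :: "real^'k"
  have "norm ((A ** B) *v x) = norm (A *v (B *v x))" by (simp add: matrix_vector_mul_assoc)
  also have "\<dots> \<le> spec_norm A * norm (B *v x)" by (rule sn_bound)
  also have "\<dots> \<le> spec_norm A * (spec_norm B * norm x)"
    by (rule mult_left_mono[OF sn_bound sn_nonneg])
  finally show "norm ((A ** B) *v x) \<le> spec_norm A * spec_norm B * norm x" by simp
qed

lemma sn_add: "spec_norm ((A::real^'n^'m) + B) \<le> spec_norm A + spec_norm B"
proof (rule sn_le)
  fix x :: "real^'n"
  have "norm ((A + B) *v x) \<le> norm (A *v x) + norm (B *v x)"
    by (simp add: matrix_vector_mult_add_rdistrib norm_triangle_ineq)
  also have "\<dots> \<le> spec_norm A * norm x + spec_norm B * norm x"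
    using sn_bound[of A x] sn_bound[of B x] by linarith
  finally show "norm ((A + B) *v x) \<le> (spec_norm A + spec_norm B) * norm x"
    by (simp add: algebra_simps)
qed

lemma sn_neg: "spec_norm (- (A::real^'n^'m)) = spec_norm A"
proof -
  have "(\<lambda>x. (- A) *v x) = (\<lambda>x. - (A *v x))"
    by (rule ext) (metis add.inverse_unique matrix_vector_mult_add_rdistrib
          matrix_vector_mult_0 add.right_inverse)
  then show ?thesis unfolding spec_norm_def using onorm_neg[of "\<lambda>x. A *v x"] by simp
qed

lemma sn_diff: "spec_norm ((A::real^'n^'m) - B) \<le> spec_norm A + spec_norm B"
  using sn_add[of A "- B"] sn_neg[of B] by simp

lemma sn_commute: "spec_norm ((A::real^'n^'m) - B) = spec_norm (B - A)"
  using sn_neg[of "B - A"] by simp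

lemma sn_transpose_le: "spec_norm (transpose (A::real^'n^'m)) \<le> spec_norm A"
proof (rule sn_le)
  fix y :: "real^'m"
  let ?z = "transpose A *v y"
  have "(norm ?z)\<^sup>2 = inner ?z ?z" by (simp add: power2_norm_eq_inner)
  also have "\<dots> = inner y (A *v ?z)"
    by (metis dot_lmul_matrix transpose_matrix_vector inner_commute)
  also have "\<dots> \<le> norm y * norm (A *v ?z)" by (rule norm_cauchy_schwarz)
  also have "\<dots> \<le> norm y * (spec_norm A * norm ?z)"
    by (rule mult_left_mono[OF sn_bound norm_ge_zero])
  finally have h: "(norm ?z)\<^sup>2 \<le> spec_norm A * norm y * norm ?z" by (simp add: algebra_simps)
  show "norm ?z \<le> spec_norm A * norm y"
  proof (cases "norm ?z = 0")
    case True then show ?thesis using sn_nonneg[of A] by simp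
  next
    case False
    then have "norm ?z > 0" by simp
    with h show ?thesis by (simp add: power2_eq_square)
  qed
qed

lemma sn_transpose: "spec_norm (transpose (A::real^'n^'m)) = spec_norm A"
  using sn_transpose_le[of A] sn_transpose_le[of "transpose A"] by simp

lemma sn_gram: "(spec_norm (A::real^'n^'m))\<^sup>2 \<le> spec_norm (transpose A ** A)"
proof -
  have "\<forall>x. norm (A *v x) \<le> sqrt (spec_norm (transpose A ** A)) * norm x"
  proof
    fix x :: "real^'n"
    have "(norm (A *v x))\<^sup>2 = inner (A *v x) (A *v x)" by (simp add: power2_norm_eq_inner)
    also have "\<dots> = inner x ((transpose A ** A) *v x)"
      by (metis dot_lmul_matrix transpose_matrix_vector matrix_vector_mul_assoc inner_commute)
    also have "\<dots> \<le> norm x * norm ((transpose A ** A) *v x)" by (rule norm_cauchy_schwarz)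
    also have "\<dots> \<le> norm x * (spec_norm (transpose A ** A) * norm x)"
      by (rule mult_left_mono[OF sn_bound norm_ge_zero])
    finally have "(norm (A *v x))\<^sup>2 \<le> (sqrt (spec_norm (transpose A ** A)) * norm x)\<^sup>2"
      using sn_nonneg[of "transpose A ** A"] by (simp add: power_mult_distrib power2_eq_square algebra_simps)
    then show "norm (A *v x) \<le> sqrt (spec_norm (transpose A ** A)) * norm x"
      using sn_nonneg[of "transpose A ** A"] by (meson abs_le_square_iff abs_of_nonneg norm_ge_zero real_sqrt_ge_zero zero_le_mult_iff abs_ge_self order_trans power2_le_imp_le)
  qed
  then have "spec_norm A \<le> sqrt (spec_norm (transpose A ** A))" by (intro sn_le) auto
  then show ?thesis using sn_nonneg[of A] sn_nonneg[of "transpose A ** A"]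
    by (metis power_mono real_sqrt_pow2)
qed

lemma mat_diff_ldistrib: "(A::real^'n^'m) ** (B - C) = A ** B - A ** C"
  by (vector matrix_matrix_mult_def sum_subtractf right_diff_distrib)

lemma mat_diff_rdistrib: "((B::real^'n^'m) - C) ** (A::real^'k^'n) = B ** A - C ** A"
  by (vector matrix_matrix_mult_def sum_subtractf left_diff_distrib)

lemma mat_add_rdistrib: "((B::real^'n^'m) + C) ** (A::real^'k^'n) = B ** A + C ** A"
  by (vector matrix_matrix_mult_def sum.distrib distrib_right)

lemma inv_facts:
  fixes M :: "real^'n^'n"
  assumes "spec_norm M < 1"
  shows "(mat 1 - M) ** matrix_inv (mat 1 - M) = mat 1"
    "matrix_inv (mat 1 - M) ** (mat 1 - M) = mat 1"
    "spec_norm (matrix_inv (mat 1 - M)) \<le> 1 / (1 - spec_norm M)"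
proof -
  let ?N = "mat 1 - M"
  have low: "(1 - spec_norm M) * norm x \<le> norm (?N *v x)" for x
  proof -
    have "?N *v x = x - M *v x" by (simp add: matrix_vector_mult_diff_rdistrib)
    then have "norm (?N *v x) \<ge> norm x - norm (M *v x)" by (simp add: norm_triangle_ineq2)
    then show ?thesis using sn_bound[of M x] by (simp add: algebra_simps)
  qed
  have "inj ((*v) ?N)"
  proof (rule injI)
    fix x y assume "?N *v x = ?N *v y"
    then have "?N *v (x - y) = 0" by (simp add: matrix_vector_mult_diff_distrib)
    then have "(1 - spec_norm M) * norm (x - y) \<le> 0" using low[of "x - y"] by simp
    then have "norm (x - y) \<le> 0" using assms by (simp add: mult_le_0_iff)
    then show "x = y" by simp
  qed
  then obtain B where "B ** ?N = mat 1" using matrix_left_invertible_injective by blast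
  then have "invertible ?N" using invertible_left_inverse by blast
  then have ex: "\<exists>A'. ?N ** A' = mat 1 \<and> A' ** ?N = mat 1" unfolding invertible_def by blast
  have both: "?N ** matrix_inv ?N = mat 1 \<and> matrix_inv ?N ** ?N = mat 1"
    unfolding matrix_inv_def by (rule someI_ex[OF ex])
  then show "?N ** matrix_inv ?N = mat 1" "matrix_inv ?N ** ?N = mat 1" by auto
  show "spec_norm (matrix_inv ?N) \<le> 1 / (1 - spec_norm M)"
  proof (rule sn_le)
    fix y :: "real^'n"
    let ?x = "matrix_inv ?N *v y"
    have "?N *v ?x = y" using both by (simp add: matrix_vector_mul_assoc)
    then have "(1 - spec_norm M) * norm ?x \<le> norm y" using low[of ?x] by simp
    then show "norm ?x \<le> 1 / (1 - spec_norm M) * norm y" using assms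
      by (simp add: field_simps)
  qed
qed


lemma orth_norm: assumes "orth_cols (U::real^'k^'m)" shows "spec_norm U \<le> 1"
proof (rule sn_le)
  fix x :: "real^'k"
  have "(norm (U *v x))\<^sup>2 = inner (U *v x) (U *v x)" by (simp add: power2_norm_eq_inner)
  also have "\<dots> = inner x ((transpose U ** U) *v x)"
    by (metis dot_lmul_matrix transpose_matrix_vector matrix_vector_mul_assoc inner_commute)
  also have "\<dots> = (norm x)\<^sup>2" using assms unfolding orth_cols_def by (simp add: power2_norm_eq_inner)
  finally show "norm (U *v x) \<le> 1 * norm x" by simp
qed

lemma diag_transpose: assumes "nonneg_diag S" shows "transpose S = S"
  using assms unfolding nonneg_diag_def transpose_def by (simp add: vec_eq_iff) metis

lemma svd_form:
  fixes X :: "real^'n^'m" and U :: "real^'k^'m" and S :: "real^'k^'k" and V :: "real^'k^'n"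
  assumes oU: "orth_cols U" and oV: "orth_cols V" and dS: "nonneg_diag S"
    and X: "X = U ** S ** transpose V" and nX: "spec_norm X < 1"
  shows "U ** S ** matrix_inv (mat 1 - S ** S) ** transpose V
         = X ** matrix_inv (mat 1 - transpose X ** X)"
proof -
  have UU: "transpose U ** U = mat 1" and VV: "transpose V ** V = mat 1"
    using oU oV unfolding orth_cols_def by auto
  have "transpose U ** X ** V = (transpose U ** U) ** S ** (transpose V ** V)"
    unfolding X by (simp add: matrix_mul_assoc)
  then have SX: "S = transpose U ** X ** V" using UU VV by simp
  have "spec_norm S \<le> spec_norm (transpose U) * spec_norm X * spec_norm V"
    unfolding SX by (meson sn_mult sn_nonneg mult_right_mono order_trans)
  also have "\<dots> \<le> 1 * spec_norm X * 1"
  proof -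
    have a: "spec_norm (transpose U) * spec_norm X \<le> 1 * spec_norm X"
      using orth_norm[OF oU] sn_transpose[of U] sn_nonneg[of X] by (intro mult_right_mono) auto
    have "spec_norm (transpose U) * spec_norm X * spec_norm V \<le> (1 * spec_norm X) * 1"
      using mult_mono[OF a orth_norm[OF oV] _ sn_nonneg[of V]] sn_nonneg[of X] by simp
    then show ?thesis by simp
  qed
  finally have nS: "spec_norm S < 1" using nX by simp
  have nSS: "spec_norm (S ** S) < 1"
  proof -
    have "spec_norm (S ** S) \<le> spec_norm S * spec_norm S" by (rule sn_mult)
    also have "\<dots> \<le> spec_norm S * 1" using nS sn_nonneg[of S] by (intro mult_left_mono) auto
    finally show ?thesis using nS by simp
  qed
  have nXX: "spec_norm (transpose X ** X) < 1"
  proof -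
    have "spec_norm (transpose X ** X) \<le> spec_norm X * spec_norm X"
      using sn_mult[of "transpose X" X] sn_transpose[of X] by simp
    also have "\<dots> \<le> spec_norm X * 1" using nX sn_nonneg[of X] by (intro mult_left_mono) auto
    finally show ?thesis using nX by simp
  qed
  define C where "C = matrix_inv (mat 1 - S ** S)"
  define A where "A = matrix_inv (mat 1 - transpose X ** X)"
  have C1: "C ** (mat 1 - S ** S) = mat 1" unfolding C_def using inv_facts(2)[OF nSS] .
  have A1: "(mat 1 - transpose X ** X) ** A = mat 1" unfolding A_def using inv_facts(1)[OF nXX] .
  have XX: "transpose X ** X = V ** (S ** S) ** transpose V"
  proof -
    have "transpose X ** X = V ** transpose S ** (transpose U ** U) ** S ** transpose V"
      unfolding X by (simp add: matrix_transpose_mul matrix_mul_assoc)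
    also have "\<dots> = V ** (S ** S) ** transpose V"
      using UU diag_transpose[OF dS] by (simp add: matrix_mul_assoc)
    finally show ?thesis .
  qed
  define L where "L = U ** S ** C ** transpose V"
  have "L ** (transpose X ** X) = U ** S ** C ** (transpose V ** V) ** (S ** S) ** transpose V"
    unfolding L_def XX by (simp add: matrix_mul_assoc)
  also have "\<dots> = U ** S ** C ** (S ** S) ** transpose V" using VV by simp
  finally have LXX: "L ** (transpose X ** X) = U ** S ** C ** (S ** S) ** transpose V" .
  have "L ** (mat 1 - transpose X ** X) = L - L ** (transpose X ** X)"
    by (simp add: mat_diff_ldistrib)
  also have "\<dots> = U ** S ** (C ** (mat 1 - S ** S)) ** transpose V"
    unfolding LXX by (simp add: L_def mat_diff_ldistrib mat_diff_rdistrib matrix_mul_assoc)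
  also have "\<dots> = X" using C1 X by simp
  finally have "L ** (mat 1 - transpose X ** X) = X" .
  then have "X ** A = L ** ((mat 1 - transpose X ** X) ** A)" by (simp add: matrix_mul_assoc)
  then have "X ** A = L" using A1 by simp
  then show ?thesis unfolding L_def C_def A_def by simp
qed


lemma transpose_diff: "transpose ((A::real^'n^'m) - B) = transpose A - transpose B"
  by (simp add: vec_eq_iff transpose_def)

lemma key:
  fixes X Y :: "real^'n^'m"
  assumes nX: "spec_norm X < 1" and nY: "spec_norm Y < 1"
    and h: "(spec_norm X)\<^sup>2 + 2 * spec_norm (Y - X) < 1"
  shows "spec_norm (X ** matrix_inv (mat 1 - transpose X ** X) - Y ** matrix_inv (mat 1 - transpose Y ** Y))
         \<le> 3 * spec_norm (X - Y) / (1 - (spec_norm X)\<^sup>2 - 2 * spec_norm (Y - X))\<^sup>2"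
proof -
  define a where "a = spec_norm X"
  define b where "b = spec_norm Y"
  define e where "e = spec_norm (Y - X)"
  define d where "d = 1 - a\<^sup>2 - 2 * e"
  define GX where "GX = transpose X ** X"
  define GY where "GY = transpose Y ** Y"
  define A where "A = matrix_inv (mat 1 - GX)"
  define B where "B = matrix_inv (mat 1 - GY)"
  have a0: "0 \<le> a" and b0: "0 \<le> b" and e0: "0 \<le> e" unfolding a_def b_def e_def by (auto intro: sn_nonneg)
  have a1: "a < 1" and b1: "b < 1" using nX nY a_def b_def by auto
  have d0: "0 < d" using h unfolding d_def a_def e_def by simp
  have d1: "d \<le> 1" unfolding d_def using e0 zero_le_power2[of a] by linarith
  have eXY: "spec_norm (X - Y) = e" unfolding e_def by (rule sn_commute)
  have nGX: "spec_norm GX \<le> a\<^sup>2"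
    using sn_mult[of "transpose X" X] sn_transpose[of X] unfolding GX_def a_def by (simp add: power2_eq_square)
  have GYX: "GY - GX = transpose Y ** (Y - X) + transpose (Y - X) ** X"
    unfolding GX_def GY_def transpose_diff by (simp add: mat_diff_ldistrib mat_diff_rdistrib)
  have nD: "spec_norm (GY - GX) \<le> 2 * e"
  proof -
    have "spec_norm (GY - GX) \<le> spec_norm (transpose Y ** (Y - X)) + spec_norm (transpose (Y - X) ** X)"
      unfolding GYX by (rule sn_add)
    also have "\<dots> \<le> b * e + e * a"
      using sn_mult[of "transpose Y" "Y - X"] sn_mult[of "transpose (Y - X)" X] sn_transpose[of Y]
        sn_transpose[of "Y - X"] unfolding a_def b_def e_def by simp
    also have "\<dots> \<le> 1 * e + e * 1"
      using a1 b1 e0 by (intro add_mono mult_right_mono mult_left_mono) auto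
    finally show ?thesis by simp
  qed
  have nGY: "spec_norm GY \<le> a\<^sup>2 + 2 * e"
  proof -
    have "GY = GX + (GY - GX)" by simp
    then have "spec_norm GY \<le> spec_norm GX + spec_norm (GY - GX)" using sn_add by metis
    then show ?thesis using nGX nD by simp
  qed
  have GX1: "spec_norm GX < 1" using nGX e0 d0 unfolding d_def by simp
  have GY1: "spec_norm GY < 1" using nGY d0 unfolding d_def by simp
  define D where "D = 1 / d"
  have D1: "1 \<le> D" unfolding D_def using d0 d1 by simp
  have nA: "spec_norm A \<le> D"
  proof -
    have "spec_norm A \<le> 1 / (1 - spec_norm GX)" unfolding A_def by (rule inv_facts(3)[OF GX1])
    also have "\<dots> \<le> 1 / d" using GX1 nGX d0 e0 unfolding d_def by (intro divide_left_mono) auto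
    finally show ?thesis unfolding D_def .
  qed
  have nB: "spec_norm B \<le> D"
  proof -
    have "spec_norm B \<le> 1 / (1 - spec_norm GY)" unfolding B_def by (rule inv_facts(3)[OF GY1])
    also have "\<dots> \<le> 1 / d" using GY1 nGY d0 unfolding d_def by (intro divide_left_mono) auto
    finally show ?thesis unfolding D_def .
  qed
  have AL: "A ** (mat 1 - GX) = mat 1" unfolding A_def by (rule inv_facts(2)[OF GX1])
  have BR: "(mat 1 - GY) ** B = mat 1" unfolding B_def by (rule inv_facts(1)[OF GY1])
  have ABd: "A ** (GY - GX) ** B = B - A"
  proof -
    have "GY - GX = (mat 1 - GX) - (mat 1 - GY)" by simp
    then have "A ** (GY - GX) ** B = A ** (mat 1 - GX) ** B - A ** ((mat 1 - GY) ** B)"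
      by (simp add: mat_diff_ldistrib mat_diff_rdistrib matrix_mul_assoc)
    then show ?thesis using AL BR by simp
  qed
  have split: "X ** A - Y ** B = (X - Y) ** A - Y ** (A ** (GY - GX) ** B)"
    unfolding ABd by (simp add: mat_diff_ldistrib mat_diff_rdistrib)
  have "spec_norm (X ** A - Y ** B) \<le> spec_norm ((X - Y) ** A) + spec_norm (Y ** (A ** (GY - GX) ** B))"
    unfolding split by (rule sn_diff)
  also have "\<dots> \<le> e * spec_norm A + b * (spec_norm A * spec_norm (GY - GX) * spec_norm B)"
  proof (rule add_mono)
    show "spec_norm ((X - Y) ** A) \<le> e * spec_norm A" using sn_mult[of "X - Y" A] eXY by simp
    have "spec_norm (A ** (GY - GX) ** B) \<le> spec_norm A * spec_norm (GY - GX) * spec_norm B"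
      by (meson sn_mult sn_nonneg mult_right_mono order_trans)
    then show "spec_norm (Y ** (A ** (GY - GX) ** B)) \<le> b * (spec_norm A * spec_norm (GY - GX) * spec_norm B)"
      using sn_mult[of Y "A ** (GY - GX) ** B"] b0 unfolding b_def
      by (meson mult_left_mono order_trans)
  qed
  also have "\<dots> \<le> e * (D * D) + 1 * (D * (2 * e) * D)"
  proof (rule add_mono)
    have "e * spec_norm A \<le> e * D" using nA e0 by (rule mult_left_mono)
    also have "\<dots> \<le> e * (D * D)" using D1 e0 by (intro mult_left_mono) (auto simp: mult_le_cancel_left1)
    finally show "e * spec_norm A \<le> e * (D * D)" .
    have p1: "spec_norm A * spec_norm (GY - GX) \<le> D * (2 * e)"
      using mult_mono[OF nA nD] D1 sn_nonneg[of "GY - GX"] by simp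
    have p2: "spec_norm A * spec_norm (GY - GX) * spec_norm B \<le> D * (2 * e) * D"
      using mult_mono[OF p1 nB] D1 e0 sn_nonneg[of B] by simp
    show "b * (spec_norm A * spec_norm (GY - GX) * spec_norm B) \<le> 1 * (D * (2 * e) * D)"
      using mult_mono[OF _ p2, of b 1] b1 b0 sn_nonneg[of A] sn_nonneg[of B] sn_nonneg[of "GY - GX"] by simp
  qed
  also have "\<dots> = 3 * e / d\<^sup>2" unfolding D_def by (simp add: power2_eq_square field_simps)
  finally show ?thesis unfolding A_def B_def GX_def GY_def eXY d_def a_def e_def .
qed

theorem lemma5:
  fixes X Xh :: "real^'n^'m"
    and U :: "real^'k^'m" and S :: "real^'k^'k" and V :: "real^'k^'n"
    and Uh :: "real^'l^'m" and Sh :: "real^'l^'l" and Vh :: "real^'l^'n"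
  assumes "orth_cols U" "orth_cols V" "nonneg_diag S" "X = U ** S ** transpose V"
    and "orth_cols Uh" "orth_cols Vh" "nonneg_diag Sh" "Xh = Uh ** Sh ** transpose Vh"
    and "spec_norm X < 1" "spec_norm Xh < 1"
    and "(spec_norm X)\<^sup>2 + 2 * spec_norm (Xh - X) < 1"
  shows "spec_norm (U ** S ** matrix_inv (mat 1 - S ** S) ** transpose V
                    - Uh ** Sh ** matrix_inv (mat 1 - Sh ** Sh) ** transpose Vh)
         \<le> 3 * spec_norm (X - Xh) / (1 - (spec_norm X)\<^sup>2 - 2 * spec_norm (Xh - X))\<^sup>2"
  using key[OF assms(9,10,11)] svd_form[OF assms(1-4,9)] svd_form[OF assms(5-8,10)] by simp

end
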